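(* Let $\Phi$ be a finite-valued Young function with $\Phi(t)\neq0$ for $t>0$, and suppose $q_\Phi>1$. Then there is a strictly convex Young function which is equivalent to $\Phi$.
   Context: A Young function is a map $\Phi:[0,\infty)\to[0,\infty]$ which is convex, satisfies $\Phi(0)=0$ and $\lim_{t\to\infty}\Phi(t)=+\infty$. Two Young functions $\Phi_1,\Phi_2$ are equivalent if there is $C\ge1$ with $C^{-1}\Phi_2\le\Phi_1\le C\Phi_2$ on $[0,\infty)$. For a finite-valued Young function positive on $(0,\infty)$, $q_\Phi=\inf_{t>0}\frac{t\Phi'_+(t)}{\Phi(t)}$, where $\Phi'_+$ is the right derivative. *)

theory Defs
  imports "HOL-Analysis.Analysis"
begin

text \<open>Young functions are modelled as maps real \<Rightarrow> ereal; only their values on [0,\<infinity>) matter.\<close>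

definition young_convex :: "(real \<Rightarrow> ereal) \<Rightarrow> bool" where
  "young_convex \<Phi> \<longleftrightarrow> (\<forall>x\<ge>0. \<forall>y\<ge>0. \<forall>a::real. 0 \<le> a \<and> a \<le> 1 \<longrightarrow>
      \<Phi> (a * x + (1 - a) * y) \<le> ereal a * \<Phi> x + ereal (1 - a) * \<Phi> y)"

definition young_function :: "(real \<Rightarrow> ereal) \<Rightarrow> bool" where
  "young_function \<Phi> \<longleftrightarrow> (\<forall>t\<ge>0. \<Phi> t \<ge> 0) \<and> young_convex \<Phi> \<and> \<Phi> 0 = 0 \<and>
      ((\<lambda>t. \<Phi> t) \<longlongrightarrow> \<infinity>) at_top"

definition strictly_convex_young :: "(real \<Rightarrow> ereal) \<Rightarrow> bool" where
  "strictly_convex_young \<Phi> \<longleftrightarrow> (\<forall>x\<ge>0. \<forall>y\<ge>0. \<forall>a::real. x \<noteq> y \<and> 0 < a \<and> a < 1 \<longrightarrow>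
      \<Phi> (a * x + (1 - a) * y) < ereal a * \<Phi> x + ereal (1 - a) * \<Phi> y)"

definition young_equivalent :: "(real \<Rightarrow> ereal) \<Rightarrow> (real \<Rightarrow> ereal) \<Rightarrow> bool" where
  "young_equivalent \<Phi>1 \<Phi>2 \<longleftrightarrow> (\<exists>C::real. C \<ge> 1 \<and> (\<forall>t\<ge>0.
      ereal (1 / C) * \<Phi>2 t \<le> \<Phi>1 t \<and> \<Phi>1 t \<le> ereal C * \<Phi>2 t))"

definition right_deriv :: "(real \<Rightarrow> real) \<Rightarrow> real \<Rightarrow> real" where
  "right_deriv f t = Lim (at_right 0) (\<lambda>h. (f (t + h) - f t) / h)"

definition q_index :: "(real \<Rightarrow> ereal) \<Rightarrow> real" where
  "q_index \<Phi> = (INF t\<in>{0<..}. t * right_deriv (\<lambda>s. real_of_ereal (\<Phi> s)) t / real_of_ereal (\<Phi> t))"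

end

theory Submission imports Defs begin
definition gg :: "real \<Rightarrow> real" where "gg u = 2*u - 1 + 1/(1+u)"

lemma inv_conv_id:
  fixes p q a :: real assumes "p>0" "q>0" "0\<le>a" "a\<le>1"
  shows "a/p + (1-a)/q - 1/(a*p+(1-a)*q) = a*(1-a)*(p-q)^2/(p*q*(a*p+(1-a)*q))"
proof -
  have "a*p+(1-a)*q > 0"
  proof (cases "a = 0")
    case True then show ?thesis using assms by simp
  next
    case False then have "a*p>0" using assms by simp
    moreover have "(1-a)*q \<ge> 0" using assms by simp
    ultimately show ?thesis by linarith
  qed
  then show ?thesis using assms by (simp add: field_simps power2_eq_square)
qed

lemma gg_conv:
  assumes "x\<ge>0" "y\<ge>0" "0\<le>a" "a\<le>1"
  shows "gg (a*x+(1-a)*y) \<le> a*gg x + (1-a)*gg y"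
proof -
  have pos: "a*(1+x)+(1-a)*(1+y) > 0"
  proof -
    have "a*(1+x) \<ge> a" using assms by (simp add: algebra_simps)
    moreover have "(1-a)*(1+y) \<ge> (1-a)*1" using assms by (intro mult_left_mono) auto
    ultimately show ?thesis by simp
  qed
  have "a*(1-a)*((1+x)-(1+y))^2/((1+x)*(1+y)*(a*(1+x)+(1-a)*(1+y))) \<ge> 0"
    using assms pos by (intro divide_nonneg_pos mult_nonneg_nonneg) auto
  hence "1/(a*(1+x)+(1-a)*(1+y)) \<le> a/(1+x) + (1-a)/(1+y)"
    using inv_conv_id[of "1+x" "1+y" a] assms by linarith
  moreover have "a*(1+x)+(1-a)*(1+y) = 1 + (a*x+(1-a)*y)" by (simp add: algebra_simps)
  ultimately show ?thesis unfolding gg_def by (simp add: algebra_simps)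
qed

lemma gg_strict:
  assumes "x\<ge>0" "y\<ge>0" "0<a" "a<1" "x\<noteq>y"
  shows "gg (a*x+(1-a)*y) < a*gg x + (1-a)*gg y"
proof -
  have pos: "a*(1+x)+(1-a)*(1+y) > 0"
  proof -
    have "a*(1+x) \<ge> a" using assms by (simp add: algebra_simps)
    moreover have "(1-a)*(1+y) \<ge> (1-a)*1" using assms by (intro mult_left_mono) auto
    ultimately show ?thesis by simp
  qed
  have "((1+x)-(1+y))^2 > 0" using assms by simp
  hence "a*(1-a)*((1+x)-(1+y))^2/((1+x)*(1+y)*(a*(1+x)+(1-a)*(1+y))) > 0"
    using assms pos by (intro divide_pos_pos mult_pos_pos) auto
  hence "1/(a*(1+x)+(1-a)*(1+y)) < a/(1+x) + (1-a)/(1+y)"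
    using inv_conv_id[of "1+x" "1+y" a] assms by linarith
  moreover have "a*(1+x)+(1-a)*(1+y) = 1 + (a*x+(1-a)*y)" by (simp add: algebra_simps)
  ultimately show ?thesis unfolding gg_def by (simp add: algebra_simps)
qed

lemma gg_mono: assumes "0\<le>u" "u\<le>v" shows "gg u \<le> gg v"
proof -
  have "1/(1+u) - 1/(1+v) = (v-u)/((1+u)*(1+v))" using assms by (simp add: field_simps)
  also have "\<dots> \<le> v - u"
  proof -
    have "(1+u)*(1+v) \<ge> 1" using assms by (smt (verit) mult_ge1_I)
    thus ?thesis using assms by (simp add: divide_le_eq) (smt (verit) mult_left_mono mult_cancel_left1)
  qed
  finally show ?thesis unfolding gg_def using assms by linarith
qed

lemma gg_bounds: assumes "u\<ge>0" shows "u \<le> gg u" "gg u \<le> 2*u" "gg 0 = 0"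
proof -
  have "u*u/(1+u) \<ge> 0" using assms by simp
  moreover have "u - 1 + 1/(1+u) = u*u/(1+u)" using assms by (simp add: field_simps)
  ultimately show "u \<le> gg u" unfolding gg_def by linarith
  have "1/(1+u) \<le> 1" using assms by simp
  thus "gg u \<le> 2*u" unfolding gg_def by linarith
  show "gg 0 = 0" unfolding gg_def by simp
qed

theorem mainTheorem10:
  fixes \<Phi> :: "real \<Rightarrow> ereal"
  assumes "young_function \<Phi>"
    and "\<forall>t\<ge>0. \<Phi> t < \<infinity>"
    and "\<forall>t>0. \<Phi> t \<noteq> 0"
    and "q_index \<Phi> > 1"
  shows "\<exists>\<Psi>. young_function \<Psi> \<and> strictly_convex_young \<Psi> \<and> young_equivalent \<Psi> \<Phi>"
proof -
  define \<phi> where "\<phi> t = real_of_ereal (\<Phi> t)" for t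
  have Y: "\<forall>t\<ge>0. \<Phi> t \<ge> 0" "young_convex \<Phi>" "\<Phi> 0 = 0" "((\<lambda>t. \<Phi> t) \<longlongrightarrow> \<infinity>) at_top"
    using assms(1) unfolding young_function_def by auto
  have fin: "\<Phi> t = ereal (\<phi> t)" if "t \<ge> 0" for t
    using Y(1) assms(2) that unfolding \<phi>_def by (cases "\<Phi> t") auto
  have nn: "\<phi> t \<ge> 0" if "t \<ge> 0" for t
    using Y(1) fin that by fastforce
  have p0: "\<phi> 0 = 0" using Y(3) unfolding \<phi>_def by simp
  have pos: "\<phi> t > 0" if "t > 0" for t
    using nn[of t] fin[of t] assms(3) that by fastforce
  have conv: "\<phi> (a*x+(1-a)*y) \<le> a*\<phi> x + (1-a)*\<phi> y"
    if "x\<ge>0" "y\<ge>0" "0\<le>a" "a\<le>1" for x y a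
  proof -
    have m: "a*x+(1-a)*y \<ge> 0" using that by simp
    have "\<Phi> (a*x+(1-a)*y) \<le> ereal a * \<Phi> x + ereal (1-a) * \<Phi> y"
      using Y(2) that unfolding young_convex_def by blast
    thus ?thesis using fin[OF m] fin[OF that(1)] fin[OF that(2)] by simp
  qed
  have smono: "\<phi> s < \<phi> t" if "0 \<le> s" "s < t" for s t
  proof -
    have t: "t > 0" using that by simp
    have "\<phi> ((s/t)*t+(1-s/t)*0) \<le> (s/t)*\<phi> t + (1-s/t)*\<phi> 0"
      using conv[of t 0 "s/t"] that t by simp
    hence "\<phi> s \<le> (s/t)*\<phi> t" using t p0 by simp
    also have "\<dots> < \<phi> t" using pos[OF t] that t by (simp add: divide_less_eq)
    finally show ?thesis .
  qed
  have inj: "\<phi> x \<noteq> \<phi> y" if "x\<ge>0" "y\<ge>0" "x\<noteq>y" for x y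
    using smono[of x y] smono[of y x] that by (cases "x<y") auto
  define \<Psi> where "\<Psi> t = ereal (gg (\<phi> t))" for t
  have yf: "young_function \<Psi>"
    unfolding young_function_def
  proof (intro conjI allI impI)
    fix t :: real assume "t\<ge>0" thus "\<Psi> t \<ge> 0"
      unfolding \<Psi>_def using gg_bounds(1)[OF nn] nn by (smt (verit) ereal_less_eq(5))
  next
    show "young_convex \<Psi>" unfolding young_convex_def
    proof (intro allI impI)
      fix x y a :: real assume h: "0\<le>x" "0\<le>y" "0 \<le> a \<and> a \<le> 1"
      have "gg (\<phi> (a*x+(1-a)*y)) \<le> gg (a*\<phi> x + (1-a)*\<phi> y)"
        using gg_mono conv[of x y a] h nn by simp
      also have "\<dots> \<le> a*gg (\<phi> x) + (1-a)*gg (\<phi> y)"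
        using gg_conv h nn by simp
      finally show "\<Psi> (a*x+(1-a)*y) \<le> ereal a * \<Psi> x + ereal (1-a) * \<Psi> y"
        unfolding \<Psi>_def by simp
    qed
  next
    show "\<Psi> 0 = 0" unfolding \<Psi>_def using p0 gg_bounds(3)[of 0] by simp
  next
    show "((\<lambda>t. \<Psi> t) \<longlongrightarrow> \<infinity>) at_top"
      unfolding tendsto_PInfty
    proof
      fix r
      have "eventually (\<lambda>x. ereal r < \<Phi> x) at_top" using Y(4) unfolding tendsto_PInfty by blast
      moreover have "eventually (\<lambda>x. x \<ge> (0::real)) at_top" by (rule eventually_ge_at_top)
      ultimately show "eventually (\<lambda>x. ereal r < \<Psi> x) at_top"
      proof eventually_elim
        case (elim x)
        hence "r < \<phi> x" using fin by auto
        also have "\<dots> \<le> gg (\<phi> x)" using gg_bounds(1)[OF nn] elim by simp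
        finally show ?case unfolding \<Psi>_def by simp
      qed
    qed
  qed
  have sc: "strictly_convex_young \<Psi>" unfolding strictly_convex_young_def
  proof (intro allI impI)
    fix x y a :: real assume h: "0\<le>x" "0\<le>y" "x \<noteq> y \<and> 0 < a \<and> a < 1"
    have "gg (\<phi> (a*x+(1-a)*y)) \<le> gg (a*\<phi> x + (1-a)*\<phi> y)"
      using gg_mono conv[of x y a] h nn by simp
    also have "\<dots> < a*gg (\<phi> x) + (1-a)*gg (\<phi> y)"
      using gg_strict h nn inj by simp
    finally show "\<Psi> (a*x+(1-a)*y) < ereal a * \<Psi> x + ereal (1-a) * \<Psi> y"
      unfolding \<Psi>_def by simp
  qed
  have eq: "young_equivalent \<Psi> \<Phi>" unfolding young_equivalent_def
  proof (intro exI[of _ 2] conjI allI impI)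
    fix t :: real assume t: "t \<ge> 0"
    show "ereal (1/2) * \<Phi> t \<le> \<Psi> t"
      unfolding \<Psi>_def fin[OF t] using gg_bounds(1)[OF nn[OF t]] nn[OF t] by simp
    show "\<Psi> t \<le> ereal 2 * \<Phi> t"
      unfolding \<Psi>_def fin[OF t] using gg_bounds(2)[OF nn[OF t]] by simp
  qed simp
  show ?thesis using yf sc eq by blast
qed

end
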